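(* For every positive integer $n$, $$\sum_{k=0}^{n-1}k(k+1)(8k+9)T_kT_{k+1}=\frac{(-1)^nn}{6}\sum_{k=0}^{n-1}\binom{n-1}{k}\binom{-n-1}{k}C_k3^{n-1-k}a(n,k),$$ where $$a(n,k)=4k^2n^2-8kn^3-14k^2n-14kn^2-4n^3+13k^2-11kn-26n^2+39k+4n+26.$$
   Context: $T_n=\sum_{k=0}^{\lfloor n/2\rfloor}\binom{n}{2k}\binom{2k}{k}$ is the central trinomial coefficient (constant term of $(1+x+x^{-1})^n$); $C_k=\binom{2k}{k}/(k+1)$; $\binom{x}{k}=x(x-1)\cdots(x-k+1)/k!$ for any integer $x$. *)

theory Defs
  imports Complex_Main
begin

definition central_trinomial :: "nat \<Rightarrow> nat" where
  "central_trinomial n = (\<Sum>k = 0..n div 2. (n choose (2*k)) * ((2*k) choose k))"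

definition catalan :: "nat \<Rightarrow> rat" where
  "catalan k = of_nat ((2*k) choose k) / of_nat (k + 1)"

definition a_coef :: "int \<Rightarrow> int \<Rightarrow> int" where
  "a_coef n k = 4*k^2*n^2 - 8*k*n^3 - 14*k^2*n - 14*k*n^2 - 4*n^3 + 13*k^2
     - 11*k*n - 26*n^2 + 39*k + 4*n + 26"

end

theory Submission
  imports Defs
begin


lemma R1: "(of_nat (Suc m choose k) :: rat) * (of_nat m + 1 - of_nat k) = (of_nat m + 1) * of_nat (m choose k)"
proof (cases "k \<le> Suc m")
  case True
  have "(Suc m - k) * (Suc m choose k) = Suc m * (m choose k)" using binomial_absorb_comp[of "Suc m" k] by simp
  hence e1: "of_nat (Suc m - k) * of_nat (Suc m choose k) = (of_nat (Suc m) * of_nat (m choose k) :: rat)" by (metis of_nat_mult)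
  have e2: "of_nat (Suc m - k) = of_nat (Suc m) - (of_nat k::rat)" using True by (rule of_nat_diff)
  have "(of_nat (Suc m) - of_nat k) * of_nat (Suc m choose k) = (of_nat (Suc m) * of_nat (m choose k) :: rat)" using e1 e2 by metis
  thus ?thesis by (simp add: algebra_simps)
next
  case False thus ?thesis by (simp add: binomial_eq_0)
qed

lemma R2: "(of_nat (m choose Suc k) :: rat) * (of_nat k + 1) = of_nat (m choose k) * (of_nat m - of_nat k)"
proof (cases "k \<le> m")
  case True
  have "Suc k * (m choose Suc k) = (m - k) * (m choose k)"
    using binomial_absorption[of k m] binomial_absorb_comp[of m k] by simp
  hence e1: "of_nat (Suc k) * of_nat (m choose Suc k) = (of_nat (m - k) * of_nat (m choose k) :: rat)" by (metis of_nat_mult)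
  have e2: "of_nat (m - k) = of_nat m - (of_nat k::rat)" using True by (rule of_nat_diff)
  have "of_nat (Suc k) * of_nat (m choose Suc k) = ((of_nat m - of_nat k) * of_nat (m choose k) :: rat)" using e1 e2 by metis
  thus ?thesis by (simp add: algebra_simps)
next
  case False thus ?thesis by (simp add: binomial_eq_0)
qed

lemma RC: "(of_nat (2*(Suc k) choose Suc k) :: rat) * (of_nat k + 1)^2 = of_nat (2*k choose k) * (2*of_nat k + 1) * (2*of_nat k + 2)"
proof -
  have a: "(of_nat (Suc (Suc (2*k)) choose Suc k) :: rat) * (of_nat k + 1) = of_nat (Suc (Suc (2*k)) choose k) * (of_nat k + 2)"
    using R2[of "Suc (Suc (2*k))" k] by simp
  have b: "(of_nat (Suc (Suc (2*k)) choose k) :: rat) * (of_nat k + 2) = (2*of_nat k + 2) * of_nat (Suc (2*k) choose k)"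
    using R1[of "Suc (2*k)" k] by (simp add: algebra_simps)
  have c: "(of_nat (Suc (2*k) choose k) :: rat) * (of_nat k + 1) = (2*of_nat k + 1) * of_nat (2*k choose k)"
    using R1[of "2*k" k] by (simp add: algebra_simps)
  have "2 * Suc k = Suc (Suc (2*k))" by simp
  hence "(of_nat (2*(Suc k) choose Suc k) :: rat) * (of_nat k + 1)^2
     = (of_nat (Suc (Suc (2*k)) choose Suc k) * (of_nat k + 1)) * (of_nat k + 1)" by (simp add: power2_eq_square)
  also have "\<dots> = (2*of_nat k + 2) * (of_nat (Suc (2*k) choose k) * (of_nat k + 1))" using a b by algebra
  also have "\<dots> = of_nat (2*k choose k) * (2*of_nat k + 1) * (2*of_nat k + 2)" using c by algebra
  finally show ?thesis .
qed

lemma RP: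
  "(of_nat (m choose k) :: rat) * c^(m-k) * c * (of_nat m + 1) = of_nat (Suc m choose k) * (of_nat m + 1 - of_nat k) * c^(Suc m - k)"
proof (cases "k \<le> m")
  case True
  hence "c^(m-k) * c = c^(Suc m - k)" by (simp add: Suc_diff_le)
  thus ?thesis using R1[of m k] by (metis mult.assoc mult.commute)
next
  case False
  show ?thesis
  proof (cases "k = Suc m")
    case True thus ?thesis by simp
  next
    case False
    thus ?thesis using \<open>\<not> k \<le> m\<close> by (simp add: binomial_eq_0)
  qed
qed

lemma RQ:
  "(of_nat (m choose Suc k) :: rat) * c^(m - Suc k) * c * (of_nat k + 1) = of_nat (m choose k) * (of_nat m - of_nat k) * c^(m-k)"
proof (cases "k < m")
  case True
  hence "c^(m - Suc k) * c = c^(m-k)" by (metis Suc_diff_Suc power_Suc2)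
  thus ?thesis using R2[of m k] by (metis mult.assoc mult.commute)
next
  case False
  show ?thesis
  proof (cases "k = m")
    case True thus ?thesis by simp
  next
    case False
    thus ?thesis using \<open>\<not> k < m\<close> by (simp add: binomial_eq_0)
  qed
qed



definition xx :: "nat \<Rightarrow> nat \<Rightarrow> rat" where
  "xx n k = of_nat (n choose k) * of_nat ((n+k) choose k) * of_nat ((2*k) choose k) * (-3)^(n-k)"
definition ww :: "nat \<Rightarrow> nat \<Rightarrow> rat" where
  "ww n k = of_nat (n choose k) * of_nat ((n+k+1) choose k) * of_nat ((2*k) choose k) * (-3)^(n-k)"

lemma core1: fixes A B B2 A0 P P0 C N K :: rat
  assumes "N \<ge> 0" "B2*(N+2) = (N+K+2)*B" "A0*P0*(-3)*(N+1) = A*(N+1-K)*P"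
  shows "(N+2)*(A*B2*C*P) = (2*N+3)*(A*B*C*P) + 3*(N+1)*(A0*B*C*P0)"
proof -
  have "(N+2)*(N+1)*3*((N+2)*(A*B2*C*P) - ((2*N+3)*(A*B*C*P) + 3*(N+1)*(A0*B*C*P0))) = 0"
    using assms(2,3) by algebra
  moreover have "(N+2)*(N+1)*3 \<noteq> 0" using assms(1) by simp
  ultimately show ?thesis by simp
qed

lemma W1: "(of_nat n + 2) * ww (Suc n) k = (2*of_nat n+3) * xx (Suc n) k + 3*(of_nat n+1) * ww n k"
proof (cases "k \<le> Suc n")
  case True
  have h1: "(of_nat (Suc n + k + 1 choose k)::rat) * (of_nat n + 2) = (of_nat n + of_nat k + 2) * of_nat (Suc n + k choose k)"
    using R1[of "Suc n + k" k] by (simp add: algebra_simps)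
  have h2: "(of_nat (n choose k)::rat) * (-3)^(n-k) * (-3) * (of_nat n + 1) = of_nat (Suc n choose k) * (of_nat n + 1 - of_nat k) * (-3)^(Suc n - k)"
    using RP[of n k "-3"] by simp
  have h3: "n + k + 1 = Suc n + k" by simp
  show ?thesis
    unfolding ww_def xx_def h3 by (rule core1[OF _ h1 h2]) simp
next
  case False
  thus ?thesis by (simp add: ww_def xx_def binomial_eq_0)
qed

definition gg2 :: "nat \<Rightarrow> nat \<Rightarrow> rat" where
  "gg2 n k = -2*(2*of_nat n+3)/((of_nat n+1)*(of_nat n+2)) * of_nat k^3 *
     (of_nat (Suc (Suc n) choose k) * of_nat ((n+k) choose k) * of_nat (2*k choose k) * (-3)^(Suc (Suc n) - k))"

lemma core2: fixes N K A B B2 Bw A1 B1 A0 P P1 P0 C Ak1 Bk1 Ck1 Pk1 KS Q :: rat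
  assumes "N \<ge> 0" "K \<ge> 0"
   "Bw*(N+1) = (N+K+1)*B"
   "B1 = Bw"
   "B2*(N+2) = (N+K+2)*B1"
   "A1*P1*(-3)*(N+2) = A*(N+2-K)*P"
   "A0*P0*(-3)*(N+1) = A1*(N+1-K)*P1"
   "Ak1*Pk1*(-3)*(K+1) = A*(N+2-K)*P"
   "Bk1*(K+1) = Bw*(N+1)"
   "Ck1*(K+1)^2 = C*(2*K+1)*(2*K+2)"
   "KS = K+1"
   "Q*((N+1)*(N+2)) = -2*(2*N+3)"
  shows "(N+2)^2*(A*B2*C*P) - (2*N+3)^2*(A1*B1*C*P1) - 6*(2*N+3)*(N+1)*(A0*Bw*C*P0) - 9*(N+1)^2*(A0*B*C*P0)
    = Q * KS^3 * (Ak1*Bk1*Ck1*Pk1) - Q * K^3 * (A*B*C*P)"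
proof -
  have nz: "(N+1)^3*(N+2)^3*(K+1)^4*9 \<noteq> 0" using assms(1,2) by simp
  have "(N+1)^3*(N+2)^3*(K+1)^4*9 * (((N+2)^2*(A*B2*C*P) - (2*N+3)^2*(A1*B1*C*P1) - 6*(2*N+3)*(N+1)*(A0*Bw*C*P0) - 9*(N+1)^2*(A0*B*C*P0))
    - (Q * KS^3 * (Ak1*Bk1*Ck1*Pk1) - Q * K^3 * (A*B*C*P))) = 0"
    using assms(3-) by algebra
  thus ?thesis using nz by simp
qed

lemma W2: "(of_nat n + 2)^2 * xx (Suc (Suc n)) k - (2*of_nat n+3)^2 * xx (Suc n) k - 6*(2*of_nat n+3)*(of_nat n+1) * ww n k - 9*(of_nat n+1)^2 * xx n k = gg2 n (Suc k) - gg2 n k"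
proof -
  have hB: "(of_nat (n+k+1 choose k)::rat) * (of_nat n+1) = (of_nat n+of_nat k+1) * of_nat (n+k choose k)"
    using R1[of "n+k" k] by (simp add: algebra_simps)
  have hB1: "(of_nat (Suc n + k choose k)::rat) = of_nat (n+k+1 choose k)" by simp
  have hB2: "(of_nat (Suc (Suc n) + k choose k)::rat) * (of_nat n+2) = (of_nat n+of_nat k+2) * of_nat (Suc n + k choose k)"
    using R1[of "Suc n + k" k] by (simp add: algebra_simps)
  have hA1: "(of_nat (Suc n choose k)::rat) * (-3)^(Suc n - k) * (-3) * (of_nat n+2) = of_nat (Suc (Suc n) choose k) * (of_nat n+2-of_nat k) * (-3)^(Suc (Suc n) - k)"
    using RP[of "Suc n" k "-3"] by (simp add: algebra_simps)
  have hA0: "(of_nat (n choose k)::rat) * (-3)^(n - k) * (-3) * (of_nat n+1) = of_nat (Suc n choose k) * (of_nat n+1-of_nat k) * (-3)^(Suc n - k)"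
    using RP[of n k "-3"] by (simp add: algebra_simps)
  have hAk: "(of_nat (Suc (Suc n) choose Suc k)::rat) * (-3)^(Suc (Suc n) - Suc k) * (-3) * (of_nat k+1) = of_nat (Suc (Suc n) choose k) * (of_nat n+2-of_nat k) * (-3)^(Suc (Suc n) - k)"
    using RQ[of "Suc (Suc n)" k "-3"] by (simp add: algebra_simps)
  have hBk: "(of_nat (n + Suc k choose Suc k)::rat) * (of_nat k+1) = of_nat (n+k+1 choose k) * (of_nat n+1)"
    using R2[of "n + Suc k" k] by (simp add: algebra_simps)
  have hC: "(of_nat (2 * Suc k choose Suc k)::rat) * (of_nat k+1)^2 = of_nat (2*k choose k) * (2*of_nat k+1) * (2*of_nat k+2)"
    using RC[of k] by simp
  have hKS: "(of_nat (Suc k)::rat) = of_nat k + 1" by simp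
  have hQ: "(-2*(2*of_nat n+3)/((of_nat n+1)*(of_nat n+2))) * ((of_nat n+1)*(of_nat n+2)) = (-2*(2*of_nat n+3)::rat)"
  proof -
    have "(of_nat n+1::rat) \<noteq> 0" "(of_nat n+2::rat) \<noteq> 0" by (simp_all add: add_nonneg_pos)
    thus ?thesis by simp
  qed
  show ?thesis unfolding xx_def ww_def gg2_def
    by (rule core2[OF _ _ hB hB1 hB2 hA1 hA0 hAk hBk hC hKS hQ]) simp_all
qed

definition tt :: "nat \<Rightarrow> nat \<Rightarrow> rat" where
  "tt n k = of_nat (n choose (2*k)) * of_nat ((2*k) choose k)"
definition gg4 :: "nat \<Rightarrow> nat \<Rightarrow> rat" where
  "gg4 n k = -4/(of_nat n+2) * of_nat k^2 * (of_nat (Suc (Suc n) choose (2*k)) * of_nat ((2*k) choose k))"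

lemma core4: fixes N K A A1 A0 Am C Ak1 Ck1 KS Q :: rat
  assumes "N \<ge> 0" "K \<ge> 0"
   "A1*(N+2) = A*(N+2-2*K)"
   "A0*(N+1) = A1*(N+1-2*K)"
   "Am*(2*K+1) = A*(N+2-2*K)"
   "Ak1*(2*K+2) = Am*(N+1-2*K)"
   "Ck1*(K+1)^2 = C*(2*K+1)*(2*K+2)"
   "KS = K+1"
   "Q*(N+2) = -4"
  shows "(N+2)*(A*C) - (2*N+3)*(A1*C) - 3*(N+1)*(A0*C) = Q * KS^2 * (Ak1*Ck1) - Q * K^2 * (A*C)"
proof -
  have nz: "(N+1)*(N+2)*(K+1)^2*(2*K+1) \<noteq> 0" using assms(1,2) by simp
  have "(N+1)*(N+2)*(K+1)^2*(2*K+1) * (((N+2)*(A*C) - (2*N+3)*(A1*C) - 3*(N+1)*(A0*C)) - (Q * KS^2 * (Ak1*Ck1) - Q * K^2 * (A*C))) = 0"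
    using assms(3-) by algebra
  thus ?thesis using nz by simp
qed

lemma W4: "(of_nat n + 2) * tt (Suc (Suc n)) k - (2*of_nat n+3) * tt (Suc n) k - 3*(of_nat n+1) * tt n k = gg4 n (Suc k) - gg4 n k"
proof -
  have h1: "(of_nat (Suc n choose (2*k))::rat) * (of_nat n+2) = of_nat (Suc (Suc n) choose (2*k)) * (of_nat n+2-2*of_nat k)"
    using R1[of "Suc n" "2*k"] by (simp add: algebra_simps)
  have h2: "(of_nat (n choose (2*k))::rat) * (of_nat n+1) = of_nat (Suc n choose (2*k)) * (of_nat n+1-2*of_nat k)"
    using R1[of n "2*k"] by (simp add: algebra_simps)
  have h3: "(of_nat (Suc (Suc n) choose Suc (2*k))::rat) * (2*of_nat k+1) = of_nat (Suc (Suc n) choose (2*k)) * (of_nat n+2-2*of_nat k)"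
    using R2[of "Suc (Suc n)" "2*k"] by (simp add: algebra_simps)
  have h4: "(of_nat (Suc (Suc n) choose (2*Suc k))::rat) * (2*of_nat k+2) = of_nat (Suc (Suc n) choose Suc (2*k)) * (of_nat n+1-2*of_nat k)"
  proof -
    have "2 * Suc k = Suc (Suc (2*k))" by simp
    thus ?thesis using R2[of "Suc (Suc n)" "Suc (2*k)"] by (simp add: algebra_simps)
  qed
  have hC: "(of_nat (2 * Suc k choose Suc k)::rat) * (of_nat k+1)^2 = of_nat (2*k choose k) * (2*of_nat k+1) * (2*of_nat k+2)"
    using RC[of k] by simp
  have hKS: "(of_nat (Suc k)::rat) = of_nat k + 1" by simp
  have hQ: "(-4/(of_nat n+2)) * (of_nat n+2) = (-4::rat)"
  proof -
    have "(of_nat n+2::rat) \<noteq> 0" by (simp add: add_nonneg_pos)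
    thus ?thesis by (simp add: field_simps)
  qed
  show ?thesis unfolding tt_def gg4_def
    by (rule core4[OF _ _ h1 h2 h3 h4 hC hKS hQ]) simp_all
qed

definition ee :: "nat \<Rightarrow> nat \<Rightarrow> rat" where
  "ee m k = of_nat (m choose k) * ((-1)^k * of_nat ((Suc m + k) choose k)) * catalan k * 3^(m-k) * of_int (a_coef (int (Suc m)) (int k))"
definition gg3 :: "nat \<Rightarrow> nat \<Rightarrow> rat" where
  "gg3 m k = (-2*(2*of_nat (Suc m)+1)*(of_nat (Suc m) - 1)/3) * of_nat k^2 *
     (of_nat (Suc m choose k) * of_nat ((Suc m + k) choose k) * of_nat (2*k choose k) * (-3)^(Suc m - k))"

lemma sign_diff: assumes "k \<le> n" shows "(-1::rat)^(n-k) = (-1)^n * (-1)^k"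
proof -
  have "(-1::rat)^n = (-1)^(n-k) * (-1)^k" using assms by (simp add: power_add[symmetric])
  moreover have "(-1::rat)^k * (-1)^k = 1" by (simp add: power_add[symmetric] flip: power_mult_distrib)
  ultimately show ?thesis by (metis mult.assoc mult.right_neutral)
qed

lemma core3: fixes M K N1 N2 s1 s2 sk A B B1 Bw C Cat P3 A0 P30 PX a1 a0 Ak1 Bk1 Ck1 PXk1 KS Q :: rat
  assumes "M \<ge> 0" "K \<ge> 0"
   "N1 = M+1" "N2 = M+2" "s2 = -s1"
   "PX = s1*sk*P3"
   "A0*P30*3*(M+1) = A*(M+1-K)*P3"
   "B1*(M+2) = (M+K+2)*B"
   "Bw = B1"
   "Ak1*PXk1*(-3)*(K+1) = A*(M+1-K)*PX"
   "Bk1*(K+1) = B1*(M+2)"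
   "Ck1*(K+1)^2 = C*(2*K+1)*(2*K+2)"
   "Cat*(K+1) = C"
   "a1 = 4*K^2*(M+2)^2 - 8*K*(M+2)^3 - 14*K^2*(M+2) - 14*K*(M+2)^2 - 4*(M+2)^3 + 13*K^2 - 11*K*(M+2) - 26*(M+2)^2 + 39*K + 4*(M+2) + 26"
   "a0 = 4*K^2*(M+1)^2 - 8*K*(M+1)^3 - 14*K^2*(M+1) - 14*K*(M+1)^2 - 4*(M+1)^3 + 13*K^2 - 11*K*(M+1) - 26*(M+1)^2 + 39*K + 4*(M+1) + 26"
   "KS = K+1"
   "Q*3 = -2*(2*N1+1)*(N1-1)"
  shows "(s2*N2/6)*(A*(sk*B1)*Cat*P3*a1) - (s1*N1/6)*(A0*(sk*B)*Cat*P30*a0) - N1*(N1+1)*(8*N1+9)*(A*Bw*C*PX)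
     = Q*KS^2*(Ak1*Bk1*Ck1*PXk1) - Q*K^2*(A*B*C*PX)"
proof -
  define T1 where "T1 = (s2*N2/6)*(A*(sk*B1)*Cat*P3*a1)"
  define T2 where "T2 = (s1*N1/6)*(A0*(sk*B)*Cat*P30*a0)"
  define T3 where "T3 = N1*(N1+1)*(8*N1+9)*(A*Bw*C*PX)"
  define T4 where "T4 = Q*KS^2*(Ak1*Bk1*Ck1*PXk1)"
  define T5 where "T5 = Q*K^2*(A*B*C*PX)"
  define X where "X = A*B*C*P3*s1*sk"
  have t1: "6*(K+1)*T1 = X*(-(M+K+2)*a1)"
  proof -
    have "6*(K+1)*T1 = (-s1*A*sk*P3*a1)*(B1*(M+2))*(Cat*(K+1))" unfolding T1_def assms(4,5) by algebra
    also have "\<dots> = (-s1*A*sk*P3*a1)*((M+K+2)*B)*C" by (simp only: assms(8,13))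
    also have "\<dots> = X*(-(M+K+2)*a1)" unfolding X_def by algebra
    finally show ?thesis .
  qed
  have t2: "18*(K+1)*(M+1)*T2 = X*(M+1)*(M+1-K)*a0"
  proof -
    have "18*(K+1)*(M+1)*T2 = (s1*(M+1)*sk*B*a0)*(A0*P30*3*(M+1))*(Cat*(K+1))" unfolding T2_def assms(3) by algebra
    also have "\<dots> = (s1*(M+1)*sk*B*a0)*(A*(M+1-K)*P3)*C" by (simp only: assms(7,13))
    also have "\<dots> = X*(M+1)*(M+1-K)*a0" unfolding X_def by algebra
    finally show ?thesis .
  qed
  have t3: "(M+2)*T3 = X*(M+1)*(M+2)*(8*M+17)*(M+K+2)"
  proof -
    have "(M+2)*T3 = ((M+1)*(M+1+1)*(8*(M+1)+9)*A*C*s1*sk*P3)*(B1*(M+2))" unfolding T3_def assms(3,9,6) by algebra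
    also have "\<dots> = ((M+1)*(M+1+1)*(8*(M+1)+9)*A*C*s1*sk*P3)*((M+K+2)*B)" by (simp only: assms(8))
    also have "\<dots> = X*(M+1)*(M+2)*(8*M+17)*(M+K+2)" unfolding X_def by algebra
    finally show ?thesis .
  qed
  have t4: "-3*(K+1)^4*T4 = X*Q*(K+1)^2*(M+1-K)*(M+K+2)*(2*K+1)*(2*K+2)"
  proof -
    have "-3*(K+1)^4*T4 = (Q*(K+1)^2)*(Ak1*PXk1*(-3)*(K+1))*(Bk1*(K+1))*(Ck1*(K+1)^2)" unfolding T4_def assms(16) by algebra
    also have "\<dots> = (Q*(K+1)^2)*(A*(M+1-K)*PX)*(B1*(M+2))*(C*(2*K+1)*(2*K+2))" by (simp only: assms(10,11,12))
    also have "\<dots> = (Q*(K+1)^2)*(A*(M+1-K)*PX)*((M+K+2)*B)*(C*(2*K+1)*(2*K+2))" by (simp only: assms(8))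
    also have "\<dots> = X*Q*(K+1)^2*(M+1-K)*(M+K+2)*(2*K+1)*(2*K+2)" unfolding X_def assms(6) by algebra
    finally show ?thesis .
  qed
  have t5: "T5 = X*Q*K^2"
    unfolding T5_def X_def assms(6) by algebra
  have nz: "18*(K+1)^4*(M+1)*(M+2) \<noteq> 0" using assms(1,2) by simp
  from assms(17) have e7: "Q = -2*(2*N1+1)*(N1-1)/3" by (simp add: field_simps)
  have "18*(K+1)^4*(M+1)*(M+2)*(T1 - T2 - T3 - (T4 - T5)) =
     3*(K+1)^3*(M+1)*(M+2)*(6*(K+1)*T1) - (K+1)^3*(M+2)*(18*(K+1)*(M+1)*T2) - 18*(K+1)^4*(M+1)*((M+2)*T3)
     + 6*(M+1)*(M+2)*(-3*(K+1)^4*T4) + 18*(K+1)^4*(M+1)*(M+2)*T5" by algebra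
  also have "\<dots> = 3*(K+1)^3*(M+1)*(M+2)*(X*(-(M+K+2)*a1)) - (K+1)^3*(M+2)*(X*(M+1)*(M+1-K)*a0) - 18*(K+1)^4*(M+1)*(X*(M+1)*(M+2)*(8*M+17)*(M+K+2))
     + 6*(M+1)*(M+2)*(X*Q*(K+1)^2*(M+1-K)*(M+K+2)*(2*K+1)*(2*K+2)) + 18*(K+1)^4*(M+1)*(M+2)*(X*Q*K^2)"
    by (simp only: t1 t2 t3 t4 t5)
  also have "\<dots> = 0" unfolding e7 assms(14,15,3) by algebra
  finally have "18*(K+1)^4*(M+1)*(M+2)*(T1 - T2 - T3 - (T4 - T5)) = 0" .
  hence "T1 - T2 - T3 = T4 - T5" using nz by simp
  thus ?thesis unfolding T1_def T2_def T3_def T4_def T5_def .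
qed

lemma W3: assumes "k \<le> Suc m"
  shows "((-1)^(Suc (Suc m)) * of_nat (Suc (Suc m)) / 6) * ee (Suc m) k - ((-1)^(Suc m) * of_nat (Suc m) / 6) * ee m k
    - of_nat (Suc m) * (of_nat (Suc m)+1) * (8*of_nat (Suc m)+9) * ww (Suc m) k = gg3 m (Suc k) - gg3 m k"
proof -
  have h3: "(of_nat (Suc m)::rat) = of_nat m + 1" by simp
  have h4: "(of_nat (Suc (Suc m))::rat) = of_nat m + 2" by simp
  have h5: "(-1::rat)^(Suc (Suc m)) = - ((-1::rat)^(Suc m))" by simp
  have h6: "(-3::rat)^(Suc m - k) = (-1)^(Suc m) * (-1)^k * 3^(Suc m - k)"
  proof -
    have "(-3::rat)^(Suc m - k) = (-1)^(Suc m - k) * 3^(Suc m - k)" by (simp flip: power_mult_distrib)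
    thus ?thesis using sign_diff[OF assms] by simp
  qed
  have h7: "(of_nat (m choose k)::rat) * 3^(m-k) * 3 * (of_nat m + 1) = of_nat (Suc m choose k) * (of_nat m + 1 - of_nat k) * 3^(Suc m - k)"
    using RP[of m k 3] by simp
  have h8: "(of_nat ((Suc (Suc m) + k) choose k)::rat) * (of_nat m + 2) = (of_nat m + of_nat k + 2) * of_nat ((Suc m + k) choose k)"
    using R1[of "Suc m + k" k] by (simp add: algebra_simps)
  have h9: "(of_nat ((Suc m + k + 1) choose k)::rat) = of_nat ((Suc (Suc m) + k) choose k)" by simp
  have h10: "(of_nat (Suc m choose Suc k)::rat) * (-3)^(Suc m - Suc k) * (-3) * (of_nat k + 1) = of_nat (Suc m choose k) * (of_nat m + 1 - of_nat k) * (-3)^(Suc m - k)"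
    using RQ[of "Suc m" k "-3"] by simp
  have h11: "(of_nat ((Suc m + Suc k) choose Suc k)::rat) * (of_nat k + 1) = of_nat ((Suc (Suc m) + k) choose k) * (of_nat m + 2)"
    using R2[of "Suc m + Suc k" k] by (simp add: algebra_simps)
  have h12: "(of_nat (2 * Suc k choose Suc k)::rat) * (of_nat k+1)^2 = of_nat (2*k choose k) * (2*of_nat k+1) * (2*of_nat k+2)"
    using RC[of k] by simp
  have h13: "catalan k * (of_nat k + 1) = of_nat (2*k choose k)"
  proof -
    have "(of_nat k + 1::rat) \<noteq> 0" by (simp add: add_nonneg_pos)
    thus ?thesis unfolding catalan_def by (simp add: field_simps)
  qed
  have h14: "(of_int (a_coef (int (Suc (Suc m))) (int k))::rat) = 4*of_nat k^2*(of_nat m+2)^2 - 8*of_nat k*(of_nat m+2)^3 - 14*of_nat k^2*(of_nat m+2) - 14*of_nat k*(of_nat m+2)^2 - 4*(of_nat m+2)^3 + 13*of_nat k^2 - 11*of_nat k*(of_nat m+2) - 26*(of_nat m+2)^2 + 39*of_nat k + 4*(of_nat m+2) + 26"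
    by (simp add: a_coef_def ac_simps)
  have h15: "(of_int (a_coef (int (Suc m)) (int k))::rat) = 4*of_nat k^2*(of_nat m+1)^2 - 8*of_nat k*(of_nat m+1)^3 - 14*of_nat k^2*(of_nat m+1) - 14*of_nat k*(of_nat m+1)^2 - 4*(of_nat m+1)^3 + 13*of_nat k^2 - 11*of_nat k*(of_nat m+1) - 26*(of_nat m+1)^2 + 39*of_nat k + 4*(of_nat m+1) + 26"
    by (simp add: a_coef_def ac_simps)
  have h16: "(of_nat (Suc k)::rat) = of_nat k + 1" by simp
  have h17: "(-2*(2*of_nat (Suc m)+1)*(of_nat (Suc m) - 1)/3) * 3 = (-2*(2*of_nat (Suc m)+1)*(of_nat (Suc m) - 1)::rat)" by simp
  show ?thesis unfolding ee_def ww_def gg3_def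
    by (rule core3[OF _ _ h3 h4 h5 h6 h7 h8 h9 h10 h11 h12 h13 h14 h15 h16 h17]) simp_all
qed



lemma ext_sum: fixes f :: "nat \<Rightarrow> rat"
  assumes "\<And>k. a \<le> k \<Longrightarrow> f k = 0" "a \<le> b"
  shows "(\<Sum>k<b. f k) = (\<Sum>k<a. f k)"
  by (rule sum.mono_neutral_right) (use assms in auto)

lemma xx0: "n < k \<Longrightarrow> xx n k = 0" by (simp add: xx_def binomial_eq_0)
lemma ww0: "n < k \<Longrightarrow> ww n k = 0" by (simp add: ww_def binomial_eq_0)
lemma ee0: "m < k \<Longrightarrow> ee m k = 0" by (simp add: ee_def binomial_eq_0)
lemma tt0: "n < 2*k \<Longrightarrow> tt n k = 0" by (simp add: tt_def binomial_eq_0)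

definition TT :: "nat \<Rightarrow> rat" where "TT n = of_nat (central_trinomial n)"

lemma TT_sum: assumes "n div 2 < N" shows "TT n = (\<Sum>k<N. tt n k)"
proof -
  have "TT n = (\<Sum>k\<in>{0..n div 2}. tt n k)" unfolding TT_def central_trinomial_def tt_def by simp
  also have "\<dots> = (\<Sum>k<Suc (n div 2). tt n k)" by (simp add: atLeast0AtMost lessThan_Suc_atMost)
  also have "\<dots> = (\<Sum>k<N. tt n k)"
    by (rule ext_sum[symmetric]) (use assms in \<open>auto intro!: tt0\<close>)
  finally show ?thesis .
qed

lemma T_rec: "(of_nat n + 2) * TT (Suc (Suc n)) = (2*of_nat n+3) * TT (Suc n) + 3*(of_nat n+1) * TT n"
proof -
  have "(of_nat n + 2) * TT (Suc (Suc n)) - (2*of_nat n+3) * TT (Suc n) - 3*(of_nat n+1) * TT n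
     = (\<Sum>k<n+2. (of_nat n + 2) * tt (Suc (Suc n)) k - (2*of_nat n+3) * tt (Suc n) k - 3*(of_nat n+1) * tt n k)"
    by (simp del: sum.lessThan_Suc add: TT_sum[of _ "n+2"] sum_subtractf sum_distrib_left)
  also have "\<dots> = (\<Sum>k<n+2. gg4 n (Suc k) - gg4 n k)" using W4 by simp
  also have "\<dots> = gg4 n (n+2) - gg4 n 0" by (simp only: sum_lessThan_telescope)
  also have "\<dots> = 0" by (simp add: gg4_def binomial_eq_0)
  finally show ?thesis by simp
qed

definition XX :: "nat \<Rightarrow> rat" where "XX n = (\<Sum>k<Suc n. xx n k)"
definition YY :: "nat \<Rightarrow> rat" where "YY n = (\<Sum>k<Suc n. ww n k)"

lemma XX_ext: "n \<le> b \<Longrightarrow> XX n = (\<Sum>k<Suc b. xx n k)"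
  unfolding XX_def by (rule ext_sum[symmetric]) (auto intro!: xx0)
lemma YY_ext: "n \<le> b \<Longrightarrow> YY n = (\<Sum>k<Suc b. ww n k)"
  unfolding YY_def by (rule ext_sum[symmetric]) (auto intro!: ww0)

lemma Y_rec: "(of_nat n + 2) * YY (Suc n) = (2*of_nat n+3) * XX (Suc n) + 3*(of_nat n+1) * YY n"
proof -
  have "(of_nat n + 2) * YY (Suc n) = (\<Sum>k<Suc (Suc n). (of_nat n + 2) * ww (Suc n) k)"
    by (simp del: sum.lessThan_Suc add: YY_def sum_distrib_left)
  also have "\<dots> = (\<Sum>k<Suc (Suc n). (2*of_nat n+3) * xx (Suc n) k + 3*(of_nat n+1) * ww n k)"
    using W1 by simp
  also have "\<dots> = (2*of_nat n+3) * XX (Suc n) + 3*(of_nat n+1) * YY n"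
    unfolding XX_def[of "Suc n"] YY_ext[of n "Suc n", OF le_SucI[OF order.refl]]
    by (simp only: sum.distrib sum_distrib_left)
  finally show ?thesis .
qed

lemma X_rec: "(of_nat n + 2)^2 * XX (Suc (Suc n)) = (2*of_nat n+3)^2 * XX (Suc n) + 6*(2*of_nat n+3)*(of_nat n+1) * YY n + 9*(of_nat n+1)^2 * XX n"
proof -
  have "(of_nat n + 2)^2 * XX (Suc (Suc n)) - (2*of_nat n+3)^2 * XX (Suc n) - 6*(2*of_nat n+3)*(of_nat n+1) * YY n - 9*(of_nat n+1)^2 * XX n
     = (\<Sum>k<Suc (Suc (Suc n)). (of_nat n + 2)^2 * xx (Suc (Suc n)) k - (2*of_nat n+3)^2 * xx (Suc n) k - 6*(2*of_nat n+3)*(of_nat n+1) * ww n k - 9*(of_nat n+1)^2 * xx n k)"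
    unfolding XX_def[of "Suc (Suc n)"] XX_ext[of "Suc n" "Suc (Suc n)", OF le_SucI[OF order.refl]] XX_ext[of n "Suc (Suc n)", OF le_SucI[OF le_SucI[OF order.refl]]] YY_ext[of n "Suc (Suc n)", OF le_SucI[OF le_SucI[OF order.refl]]]
    by (simp only: sum_subtractf sum_distrib_left)
  also have "\<dots> = (\<Sum>k<Suc (Suc (Suc n)). gg2 n (Suc k) - gg2 n k)" using W2 by simp
  also have "\<dots> = gg2 n (Suc (Suc (Suc n))) - gg2 n 0" by (simp only: sum_lessThan_telescope)
  also have "\<dots> = 0" by (simp add: gg2_def binomial_eq_0)
  finally show ?thesis by simp
qed


lemma XY: "XX n = TT n ^2 \<and> YY n = TT n * TT (Suc n) \<and> XX (Suc n) = TT (Suc n)^2"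
proof (induction n)
  case 0
  have t0: "TT 0 = 1" by (simp add: TT_def central_trinomial_def)
  have t1: "TT 1 = 1" by (simp add: TT_def central_trinomial_def)
  have "XX 0 = 1" by (simp add: XX_def xx_def)
  moreover have "YY 0 = 1" by (simp add: YY_def ww_def)
  moreover have "XX 1 = 1" by (simp add: XX_def xx_def)
  ultimately show ?case using t0 t1 by simp
next
  case (Suc n)
  let ?N = "of_nat n :: rat"
  have IH1: "XX n = TT n ^2" and IH2: "YY n = TT n * TT (Suc n)" and IH3: "XX (Suc n) = TT (Suc n)^2"
    using Suc.IH by auto
  have nz: "?N + 2 \<noteq> 0" by (simp add: add_nonneg_pos)
  have TR: "(?N + 2) * TT (Suc (Suc n)) = (2*?N+3) * TT (Suc n) + 3*(?N+1) * TT n" by (rule T_rec)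
  have "(?N + 2) * YY (Suc n) = (2*?N+3) * XX (Suc n) + 3*(?N+1) * YY n" by (rule Y_rec)
  also have "\<dots> = TT (Suc n) * ((2*?N+3) * TT (Suc n) + 3*(?N+1) * TT n)"
    unfolding IH2 IH3 by (simp add: algebra_simps power2_eq_square)
  also have "\<dots> = (?N + 2) * (TT (Suc n) * TT (Suc (Suc n)))" unfolding TR[symmetric] by (simp add: algebra_simps)
  finally have Y1: "YY (Suc n) = TT (Suc n) * TT (Suc (Suc n))" using nz by simp
  have "(?N + 2)^2 * XX (Suc (Suc n)) = (2*?N+3)^2 * XX (Suc n) + 6*(2*?N+3)*(?N+1) * YY n + 9*(?N+1)^2 * XX n" by (rule X_rec)
  also have "\<dots> = ((2*?N+3) * TT (Suc n) + 3*(?N+1) * TT n)^2"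
    unfolding IH1 IH2 IH3 by (simp add: algebra_simps power2_eq_square)
  also have "\<dots> = (?N + 2)^2 * TT (Suc (Suc n))^2" unfolding TR[symmetric] by (simp add: power_mult_distrib)
  finally have X2: "XX (Suc (Suc n)) = TT (Suc (Suc n))^2" using nz by simp
  show ?case using IH3 Y1 X2 by simp
qed

lemma YY_TT: "YY n = TT n * TT (Suc n)" using XY by blast

definition FF :: "nat \<Rightarrow> rat" where
  "FF m = ((-1)^(Suc m) * of_nat (Suc m) / 6) * (\<Sum>k<Suc m. ee m k)"

lemma FF_step: "FF (Suc m) - FF m = of_nat (Suc m) * (of_nat (Suc m)+1) * (8*of_nat (Suc m)+9) * YY (Suc m)"
proof -
  let ?c2 = "((-1::rat)^(Suc (Suc m)) * of_nat (Suc (Suc m)) / 6)"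
  let ?c1 = "((-1::rat)^(Suc m) * of_nat (Suc m) / 6)"
  let ?c3 = "(of_nat (Suc m) * (of_nat (Suc m)+1) * (8*of_nat (Suc m)+9) :: rat)"
  have e1: "(\<Sum>k<Suc m. ee m k) = (\<Sum>k<Suc (Suc m). ee m k)"
    by (rule ext_sum[symmetric]) (auto intro!: ee0)
  have "FF (Suc m) - FF m - ?c3 * YY (Suc m) = (\<Sum>k<Suc (Suc m). ?c2 * ee (Suc m) k - ?c1 * ee m k - ?c3 * ww (Suc m) k)"
    unfolding FF_def e1 YY_def by (simp only: sum_subtractf sum_distrib_left)
  also have "\<dots> = (\<Sum>k<Suc (Suc m). gg3 m (Suc k) - gg3 m k)"
    by (rule sum.cong[OF refl], rule W3) simp
  also have "\<dots> = gg3 m (Suc (Suc m)) - gg3 m 0" by (simp only: sum_lessThan_telescope)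
  also have "\<dots> = 0" by (simp add: gg3_def binomial_eq_0)
  finally show ?thesis by simp
qed

lemma main: "(\<Sum>k<Suc m. of_nat (k * (k+1) * (8*k+9) * central_trinomial k * central_trinomial (k+1)) :: rat) = FF m"
proof (induction m)
  case 0
  show ?case by (simp add: FF_def ee_def a_coef_def)
next
  case (Suc m)
  have "(\<Sum>k<Suc (Suc m). of_nat (k * (k+1) * (8*k+9) * central_trinomial k * central_trinomial (k+1)) :: rat)
     = FF m + of_nat (Suc m) * (of_nat (Suc m)+1) * (8*of_nat (Suc m)+9) * (TT (Suc m) * TT (Suc (Suc m)))"
    using Suc.IH by (simp add: TT_def algebra_simps)
  also have "\<dots> = FF (Suc m)" using FF_step[of m] YY_TT[of "Suc m"] by simp
  finally show ?case .
qed

lemma gch: "((- of_nat (Suc m) - 1) gchoose k :: rat) = (-1)^k * of_nat ((Suc m + k) choose k)"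
proof -
  have e: "of_nat k - (- of_nat (Suc m) - 1) - 1 = (of_nat (Suc m + k) :: rat)" by simp
  have "((- of_nat (Suc m) - 1) gchoose k :: rat) = (-1)^k * ((of_nat k - (- of_nat (Suc m) - 1) - 1) gchoose k)"
    by (rule gbinomial_negated_upper)
  also have "\<dots> = (-1)^k * (of_nat (Suc m + k) gchoose k)" unfolding e ..
  also have "\<dots> = (-1)^k * of_nat ((Suc m + k) choose k)" by (simp only: binomial_gbinomial)
  finally show ?thesis .
qed

theorem lemma3p2:
  fixes n :: nat
  assumes "n \<ge> 1"
  shows "(\<Sum>k = 0..n-1. of_nat (k * (k+1) * (8*k+9) * central_trinomial k * central_trinomial (k+1)) :: rat)
    = ((-1)^n * of_nat n / 6) *
      (\<Sum>k = 0..n-1. of_nat ((n-1) choose k) * ((- of_nat n - 1) gchoose k) * catalan k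
          * 3^(n-1-k) * of_int (a_coef (int n) (int k)))"
proof -
  obtain m where n: "n = Suc m" using assms by (cases n) auto
  have s: "{0..n-1} = {..<Suc m}" unfolding n by auto
  show ?thesis unfolding s main
    unfolding FF_def n gch by (simp add: ee_def)
qed


end
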